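(* Let $\Omega_{\mathbf H}$ denote the restriction of the 3-form $\Omega(z_1,z_2,z_3)=\langle z_1\times z_2,z_3\rangle$ to the tangent bundle of $\mathbf H^{4,2}$, regarded as a complex-valued 3-form on the almost complex manifold $(\mathbf H^{4,2},\mathbf J)$ and decomposed by type as $\Omega_{\mathbf H}=\theta+\zeta+\bar\zeta+\bar\theta$ with $\theta$ of type $(3,0)$ and $\zeta$ of type $(2,1)$. Then $\theta$ is nowhere vanishing and $\zeta$ is identically zero. In particular $\theta$ trivializes the canonical bundle of $(\mathbf H^{4,2},\mathbf J)$.
   Context: Split octonions: $\mathbb H'$ has basis $1,j,\delta,\epsilon$ with $j^2=-1$, $\delta^2=\epsilon^2=1$, $j\delta=-\delta j=\epsilon$; $\mathbb O'=\mathbb H'\oplus\mathbb H'$ with $(x_1,y_1)\cdot(x_2,y_2)=(x_1x_2-\bar y_2y_1,\ y_2x_1+y_1\bar x_2)$, conjugation $(x,y)\mapsto(\bar x,-y)$, and $\mathrm{Im}(\mathbb O')$ the $(-1)$-eigenspace. For $z_1,z_2\in\mathrm{Im}(\mathbb O')$: $\langle z_1,z_2\rangle=\tfrac12(z_1z_2+\overline{z_1z_2})$, $z_1\times z_2=\tfrac12(z_1z_2-\overline{z_1z_2})$, $\mathbf q(z)=\langle z,z\rangle$ (signature $(4,3)$). $\mathbf H^{4,2}=\{z:\mathbf q(z)=-1\}$, $T_z\mathbf H^{4,2}=z^\perp$, and $\mathbf J_z(w)=z\times w$ is an almost complex structure on $\mathbf H^{4,2}$. *)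

theory Defs
  imports "HOL-Analysis.Analysis"
begin

text \<open>An element a + b j + c delta + d eps of H' is the vector (a,b,c,d) in real^4,
  components accessed as x$1, x$2, x$3, x$4.\<close>

type_synonym hsplit = "real ^ 4"

definition HS :: "real \<Rightarrow> real \<Rightarrow> real \<Rightarrow> real \<Rightarrow> hsplit" where
  "HS a b c d = vector [a, b, c, d]"

text \<open>Multiplication determined bilinearly by j^2 = -1, delta^2 = eps^2 = 1,
  j delta = - delta j = eps (hence j eps = -delta, eps j = delta,
  delta eps = -j, eps delta = j).\<close>

definition hmult :: "hsplit \<Rightarrow> hsplit \<Rightarrow> hsplit" where
  "hmult x y = HS
     (x$1 * y$1 - x$2 * y$2 + x$3 * y$3 + x$4 * y$4)
     (x$1 * y$2 + x$2 * y$1 - x$3 * y$4 + x$4 * y$3)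
     (x$1 * y$3 + x$3 * y$1 - x$2 * y$4 + x$4 * y$2)
     (x$1 * y$4 + x$4 * y$1 + x$2 * y$3 - x$3 * y$2)"

definition hconj :: "hsplit \<Rightarrow> hsplit" where
  "hconj x = HS (x$1) (- x$2) (- x$3) (- x$4)"

section \<open>Split octonions O' = H' + H' (Cayley--Dickson)\<close>

type_synonym osplit = "hsplit \<times> hsplit"

definition omult :: "osplit \<Rightarrow> osplit \<Rightarrow> osplit" where
  "omult z w = (case z of (x1, y1) \<Rightarrow> case w of (x2, y2) \<Rightarrow>
      (hmult x1 x2 - hmult (hconj y2) y1, hmult y2 x1 + hmult y1 (hconj x2)))"

definition oconj :: "osplit \<Rightarrow> osplit" where
  "oconj z = (hconj (fst z), - snd z)"

definition ImO :: "osplit set" where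
  "ImO = {z. oconj z = - z}"

definition oone :: osplit where
  "oone = (HS 1 0 0 0, 0)"

text \<open>The O'-valued expression (1/2)(z1 z2 + conj(z1 z2)) lies in the real line R*1;
  the inner product is the real coefficient of 1.\<close>

definition oinner_el :: "osplit \<Rightarrow> osplit \<Rightarrow> osplit" where
  "oinner_el z1 z2 = (1/2) *\<^sub>R (omult z1 z2 + oconj (omult z1 z2))"

definition oinner :: "osplit \<Rightarrow> osplit \<Rightarrow> real" where
  "oinner z1 z2 = fst (oinner_el z1 z2) $ 1"

definition ocross :: "osplit \<Rightarrow> osplit \<Rightarrow> osplit" where
  "ocross z1 z2 = (1/2) *\<^sub>R (omult z1 z2 - oconj (omult z1 z2))"

definition oq :: "osplit \<Rightarrow> real" where
  "oq z = oinner z z"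

definition H42 :: "osplit set" where
  "H42 = {z \<in> ImO. oq z = -1}"

definition tangentH :: "osplit \<Rightarrow> osplit set" where
  "tangentH z = {w \<in> ImO. oinner z w = 0}"

definition Jstr :: "osplit \<Rightarrow> osplit \<Rightarrow> osplit" where
  "Jstr z w = ocross z w"

definition Omega3 :: "osplit \<Rightarrow> osplit \<Rightarrow> osplit \<Rightarrow> real" where
  "Omega3 z1 z2 z3 = oinner (ocross z1 z2) z3"

text \<open>A complex tangent vector a + i b is represented by the pair (a, b).
  cext is the complex-trilinear extension of a real trilinear form.\<close>

definition cext :: "('v \<Rightarrow> 'v \<Rightarrow> 'v \<Rightarrow> real) \<Rightarrow> 'v \<times> 'v \<Rightarrow> 'v \<times> 'v \<Rightarrow> 'v \<times> 'v \<Rightarrow> complex" where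
  "cext \<omega> p1 p2 p3 = (case p1 of (a1, b1) \<Rightarrow> case p2 of (a2, b2) \<Rightarrow> case p3 of (a3, b3) \<Rightarrow>
      complex_of_real (\<omega> a1 a2 a3)
    + \<i> * complex_of_real (\<omega> b1 a2 a3 + \<omega> a1 b2 a3 + \<omega> a1 a2 b3)
    - complex_of_real (\<omega> b1 b2 a3 + \<omega> b1 a2 b3 + \<omega> a1 b2 b3)
    - \<i> * complex_of_real (\<omega> b1 b2 b3))"

text \<open>(1,0)-part u^{1,0} = (u - i J u)/2 and (0,1)-part u^{0,1} = (u + i J u)/2.\<close>

definition p10 :: "('v::real_vector \<Rightarrow> 'v) \<Rightarrow> 'v \<Rightarrow> 'v \<times> 'v" where
  "p10 J u = ((1/2) *\<^sub>R u, - ((1/2) *\<^sub>R J u))"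

definition p01 :: "('v::real_vector \<Rightarrow> 'v) \<Rightarrow> 'v \<Rightarrow> 'v \<times> 'v" where
  "p01 J u = ((1/2) *\<^sub>R u, (1/2) *\<^sub>R J u)"

definition part30 :: "('v::real_vector \<Rightarrow> 'v \<Rightarrow> 'v \<Rightarrow> real) \<Rightarrow> ('v \<Rightarrow> 'v) \<Rightarrow> 'v \<Rightarrow> 'v \<Rightarrow> 'v \<Rightarrow> complex" where
  "part30 \<omega> J u v w = cext \<omega> (p10 J u) (p10 J v) (p10 J w)"

definition part21 :: "('v::real_vector \<Rightarrow> 'v \<Rightarrow> 'v \<Rightarrow> real) \<Rightarrow> ('v \<Rightarrow> 'v) \<Rightarrow> 'v \<Rightarrow> 'v \<Rightarrow> 'v \<Rightarrow> complex" where
  "part21 \<omega> J u v w =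
      cext \<omega> (p10 J u) (p10 J v) (p01 J w)
    + cext \<omega> (p10 J u) (p01 J v) (p10 J w)
    + cext \<omega> (p01 J u) (p10 J v) (p10 J w)"

definition thetaH :: "osplit \<Rightarrow> osplit \<Rightarrow> osplit \<Rightarrow> osplit \<Rightarrow> complex" where
  "thetaH z = part30 Omega3 (Jstr z)"

definition zetaH :: "osplit \<Rightarrow> osplit \<Rightarrow> osplit \<Rightarrow> osplit \<Rightarrow> complex" where
  "zetaH z = part21 Omega3 (Jstr z)"

end

theory Submission imports Defs begin
lemma HS_c[simp]: "HS a b c d $ 1 = a" "HS a b c d $ 2 = b" "HS a b c d $ 3 = c" "HS a b c d $ 4 = d"
  by (simp_all add: HS_def vector_def)
lemma ImO_iff: "z \<in> ImO \<longleftrightarrow> fst z $ 1 = 0"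
  by (cases z) (auto simp: ImO_def oconj_def hconj_def vec_eq_iff forall_4)
lemmas cs = omult_def hmult_def hconj_def oconj_def oinner_def oinner_el_def ocross_def Omega3_def oq_def
   case_prod_beta
lemma oinner_c: "oinner a b = (fst a $ 1)*(fst b $ 1) - (fst a $ 2)*(fst b $ 2) + (fst a $ 3)*(fst b $ 3) + (fst a $ 4)*(fst b $ 4) - (snd a $ 1)*(snd b $ 1) - (snd a $ 2)*(snd b $ 2) + (snd a $ 3)*(snd b $ 3) + (snd a $ 4)*(snd b $ 4)"
  by (simp add: cs algebra_simps)
lemma ocross_c: "ocross a b = (HS 0 ((fst a $ 1)*(fst b $ 2) + (fst a $ 2)*(fst b $ 1) - (fst a $ 3)*(fst b $ 4) + (fst a $ 4)*(fst b $ 3) + (snd a $ 1)*(snd b $ 2) - (snd a $ 2)*(snd b $ 1) + (snd a $ 3)*(snd b $ 4) - (snd a $ 4)*(snd b $ 3)) ((fst a $ 1)*(fst b $ 3) - (fst a $ 2)*(fst b $ 4) + (fst a $ 3)*(fst b $ 1) + (fst a $ 4)*(fst b $ 2) + (snd a $ 1)*(snd b $ 3) + (snd a $ 2)*(snd b $ 4) - (snd a $ 3)*(snd b $ 1) - (snd a $ 4)*(snd b $ 2)) ((fst a $ 1)*(fst b $ 4) + (fst a $ 2)*(fst b $ 3) - (fst a $ 3)*(fst b $ 2) + (fst a $ 4)*(fst b $ 1) + (snd a $ 1)*(snd b $ 4) - (snd a $ 2)*(snd b $ 3) + (snd a $ 3)*(snd b $ 2) - (snd a $ 4)*(snd b $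 1)), HS ((fst a $ 1)*(snd b $ 1) - (fst a $ 2)*(snd b $ 2) + (fst a $ 3)*(snd b $ 3) + (fst a $ 4)*(snd b $ 4) + (snd a $ 1)*(fst b $ 1) + (snd a $ 2)*(fst b $ 2) - (snd a $ 3)*(fst b $ 3) - (snd a $ 4)*(fst b $ 4)) ((fst a $ 1)*(snd b $ 2) + (fst a $ 2)*(snd b $ 1) + (fst a $ 3)*(snd b $ 4) - (fst a $ 4)*(snd b $ 3) - (snd a $ 1)*(fst b $ 2) + (snd a $ 2)*(fst b $ 1) + (snd a $ 3)*(fst b $ 4) - (snd a $ 4)*(fst b $ 3)) ((fst a $ 1)*(snd b $ 3) + (fst a $ 2)*(snd b $ 4) + (fst a $ 3)*(snd b $ 1) - (fst a $ 4)*(snd b $ 2) - (snd a $ 1)*(fst b $ 3) + (snd a $ 2)*(fst b $ 4) + (snd a $ 3)*(fst b $ 1) - (snd a $ 4)*(fst b $ 2)) ((fst a $ 1)*(snd b $ 4) - (fst a $ 2)*(snd b $ 3) + (fst a $ 3)*(snd b $ 2) + (fst a $ 4)*(snd b $ 1) - (snd a $ 1)*(fst b $ 4) - (snd a $ 2)*(fst b $ 3) + (snd a $ 3)*(fst b $ 2) + (snd a $ 4)*(fst b $ 1)))"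
  by (simp add: cs prod_eq_iff vec_eq_iff forall_4 algebra_simps)
lemma I1: assumes "fst z $ 1 = 0" "fst u $ 1 = 0" "fst v $ 1 = 0" "fst w $ 1 = 0"
  shows "Omega3 (ocross z u) v w - Omega3 u (ocross z v) w = - oinner z u * oinner v w - oinner z v * oinner u w + 2 * oinner z w * oinner u v"
  unfolding Omega3_def oinner_c ocross_c HS_c fst_conv snd_conv assms
  by algebra
lemma I2: assumes "fst z $ 1 = 0" "fst u $ 1 = 0" "fst v $ 1 = 0" "fst w $ 1 = 0"
  shows "Omega3 u (ocross z v) w - Omega3 u v (ocross z w) = 2 * oinner z u * oinner v w - oinner z v * oinner u w - oinner z w * oinner u v"
  unfolding Omega3_def oinner_c ocross_c HS_c fst_conv snd_conv assms
  by algebra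
lemma JJ: assumes "fst z $ 1 = 0" "fst u $ 1 = 0"
  shows "ocross z (ocross z u) = oq z *\<^sub>R u - oinner z u *\<^sub>R z"
  unfolding oq_def
  by (simp add: ocross_c oinner_c assms prod_eq_iff vec_eq_iff forall_4 algebra_simps)
lemma cross_Im: "fst (ocross a b) $ 1 = 0" by (simp add: ocross_c)
lemma inner_cross: "fst z $ 1 = 0 \<Longrightarrow> fst u $ 1 = 0 \<Longrightarrow> oinner z (ocross z u) = 0"
  by (simp add: ocross_c oinner_c algebra_simps)
lemma Om_scale1: "Omega3 (c *\<^sub>R a) b d = c * Omega3 a b d"
  unfolding Omega3_def oinner_c ocross_c by (simp add: algebra_simps)
lemma Om_scale2: "Omega3 a (c *\<^sub>R b) d = c * Omega3 a b d"
  unfolding Omega3_def oinner_c ocross_c by (simp add: algebra_simps)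
lemma Om_scale3: "Omega3 a b (c *\<^sub>R d) = c * Omega3 a b d"
  unfolding Omega3_def oinner_c ocross_c by (simp add: algebra_simps)
lemma Om_neg1: "Omega3 (- a) b d = - Omega3 a b d"
  using Om_scale1[of "-1" a b d] by simp
lemma Om_neg2: "Omega3 a (- b) d = - Omega3 a b d"
  using Om_scale2[of a "-1" b d] by simp
lemma Om_neg3: "Omega3 a b (- d) = - Omega3 a b d"
  using Om_scale3[of a b "-1" d] by simp

definition Pj :: "osplit \<Rightarrow> osplit \<Rightarrow> osplit" where
  "Pj z a = a + oinner a z *\<^sub>R z"

lemma Pj_tan: assumes "fst z $ 1 = 0" "oq z = -1" "fst a $ 1 = 0"
  shows "Pj z a \<in> tangentH z"
proof -
  have "oinner z (Pj z a) = 0"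
    using assms(2) unfolding Pj_def oq_def oinner_c using assms(1,3) by (simp add: algebra_simps) algebra
  then show ?thesis using assms by (simp add: tangentH_def ImO_iff Pj_def)
qed

lemma sum7: assumes "fst z $ 1 = 0"
  shows "Omega3 (Pj z (HS 0 1 0 0, 0)) (Pj z (HS 0 0 1 0, 0)) (Pj z (HS 0 0 0 1, 0))
       - Omega3 (Pj z (HS 0 1 0 0, 0)) (Pj z (0, HS 1 0 0 0)) (Pj z (0, HS 0 1 0 0))
       - Omega3 (Pj z (HS 0 1 0 0, 0)) (Pj z (0, HS 0 0 1 0)) (Pj z (0, HS 0 0 0 1))
       + Omega3 (Pj z (HS 0 0 1 0, 0)) (Pj z (0, HS 1 0 0 0)) (Pj z (0, HS 0 0 1 0))
       + Omega3 (Pj z (HS 0 0 1 0, 0)) (Pj z (0, HS 0 1 0 0)) (Pj z (0, HS 0 0 0 1))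
       + Omega3 (Pj z (HS 0 0 0 1, 0)) (Pj z (0, HS 1 0 0 0)) (Pj z (0, HS 0 0 0 1))
       - Omega3 (Pj z (HS 0 0 0 1, 0)) (Pj z (0, HS 0 1 0 0)) (Pj z (0, HS 0 0 1 0))
       = 7 + 3 * oq z"
  unfolding Omega3_def oq_def Pj_def oinner_c ocross_c
  using assms by (simp add: algebra_simps)

lemma tangent_facts:
  assumes z: "z \<in> H42" and u: "u \<in> tangentH z" and v: "v \<in> tangentH z" and w: "w \<in> tangentH z"
  shows "Omega3 (ocross z u) v w = Omega3 u v (ocross z w)"
    "Omega3 u (ocross z v) w = Omega3 u v (ocross z w)"
    "Omega3 (ocross z u) (ocross z v) w = - Omega3 u v w"
    "Omega3 (ocross z u) v (ocross z w) = - Omega3 u v w"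
    "Omega3 u (ocross z v) (ocross z w) = - Omega3 u v w"
    "Omega3 (ocross z u) (ocross z v) (ocross z w) = - Omega3 u v (ocross z w)"
proof -
  have z1: "fst z $ 1 = 0" and q: "oq z = -1" using z by (auto simp: H42_def ImO_iff)
  have u1: "fst u $ 1 = 0" and zu: "oinner z u = 0" using u by (auto simp: tangentH_def ImO_iff)
  have v1: "fst v $ 1 = 0" and zv: "oinner z v = 0" using v by (auto simp: tangentH_def ImO_iff)
  have w1: "fst w $ 1 = 0" and zw: "oinner z w = 0" using w by (auto simp: tangentH_def ImO_iff)
  have Ju: "fst (ocross z u) $ 1 = 0" "oinner z (ocross z u) = 0" using cross_Im inner_cross[OF z1 u1] by auto
  have Jv: "fst (ocross z v) $ 1 = 0" "oinner z (ocross z v) = 0" using cross_Im inner_cross[OF z1 v1] by auto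
  have Jw: "fst (ocross z w) $ 1 = 0" "oinner z (ocross z w) = 0" using cross_Im inner_cross[OF z1 w1] by auto
  have JJu: "ocross z (ocross z u) = - u" using JJ[OF z1 u1] q zu by simp
  have JJv: "ocross z (ocross z v) = - v" using JJ[OF z1 v1] q zv by simp
  have a1: "Omega3 (ocross z u) v w = Omega3 u (ocross z v) w"
    using I1[OF z1 u1 v1 w1] zu zv zw by simp
  show a2: "Omega3 u (ocross z v) w = Omega3 u v (ocross z w)"
    using I2[OF z1 u1 v1 w1] zu zv zw by simp
  show "Omega3 (ocross z u) v w = Omega3 u v (ocross z w)" using a1 a2 by simp
  have a3: "Omega3 (ocross z u) (ocross z v) w = - Omega3 u v w"
    using I1[OF z1 Ju(1) v1 w1] Ju(2) zv zw JJu by (simp add: Om_neg1)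
  show "Omega3 (ocross z u) (ocross z v) w = - Omega3 u v w" by (rule a3)
  show "Omega3 (ocross z u) v (ocross z w) = - Omega3 u v w"
    using I2[OF z1 Ju(1) v1 w1] Ju(2) zv zw a3 by simp
  show "Omega3 u (ocross z v) (ocross z w) = - Omega3 u v w"
    using I2[OF z1 u1 Jv(1) w1] zu Jv(2) zw JJv by (simp add: Om_neg2)
  show "Omega3 (ocross z u) (ocross z v) (ocross z w) = - Omega3 u v (ocross z w)"
    using I1[OF z1 Ju(1) v1 Jw(1)] Ju(2) zv Jw(2) JJu by (simp add: Om_neg1)
qed

lemma zeta0:
  assumes "z \<in> H42" "u \<in> tangentH z" "v \<in> tangentH z" "w \<in> tangentH z"
  shows "zetaH z u v w = 0"
  unfolding zetaH_def part21_def cext_def p10_def p01_def Jstr_def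
  by (simp add: Om_scale1 Om_scale2 Om_scale3 Om_neg1 Om_neg2 Om_neg3 tangent_facts[OF assms]
      complex_eq_iff algebra_simps)

lemma theta_re:
  assumes "z \<in> H42" "u \<in> tangentH z" "v \<in> tangentH z" "w \<in> tangentH z"
  shows "Re (thetaH z u v w) = Omega3 u v w / 2"
  unfolding thetaH_def part30_def cext_def p10_def p01_def Jstr_def
  by (simp add: Om_scale1 Om_scale2 Om_scale3 Om_neg1 Om_neg2 Om_neg3 tangent_facts[OF assms]
      algebra_simps)

theorem lemma3p4:
  shows "(\<forall>z \<in> H42. \<exists>u \<in> tangentH z. \<exists>v \<in> tangentH z. \<exists>w \<in> tangentH z.
            thetaH z u v w \<noteq> 0)
       \<and> (\<forall>z \<in> H42. \<forall>u \<in> tangentH z. \<forall>v \<in> tangentH z. \<forall>w \<in> tangentH z.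
            zetaH z u v w = 0)"
proof (intro conjI ballI)
  fix z assume z: "z \<in> H42"
  have z1: "fst z $ 1 = 0" and q: "oq z = -1" using z by (auto simp: H42_def ImO_iff)
  show "\<exists>u \<in> tangentH z. \<exists>v \<in> tangentH z. \<exists>w \<in> tangentH z. thetaH z u v w \<noteq> 0"
  proof (rule ccontr)
    assume "\<not> ?thesis"
    then have all: "\<And>u v w. u \<in> tangentH z \<Longrightarrow> v \<in> tangentH z \<Longrightarrow> w \<in> tangentH z \<Longrightarrow> Omega3 u v w = 0"
      using theta_re[OF z] by fastforce
    have T: "Pj z a \<in> tangentH z" if "fst a $ 1 = 0" for a using Pj_tan[OF z1 q that] .
    have "7 + 3 * oq z = 0"
      unfolding sum7[OF z1, symmetric] by (simp add: all T)
    then show False using q by simp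
  qed
next
  fix z u v w assume "z \<in> H42" "u \<in> tangentH z" "v \<in> tangentH z" "w \<in> tangentH z"
  then show "zetaH z u v w = 0" by (rule zeta0)
qed
end
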